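(* Let $n\ge2$, $0\le\delta<\frac1n$, let $P^0=[d_1\ \cdots\ d_{n+1}]$ be the canonical uniform simplex, and let $P^\delta=[d_1^\delta\ \cdots\ d^\delta_{n+1}]$ with $d_1^\delta=d_1$ and $d_i^\delta=\alpha(d_i+\delta e_1)$ for $2\le i\le n+1$, where $\alpha=\frac{n}{\sqrt{n^2\delta^2-2n\delta+n^2}}$ and $\beta=\alpha^2\frac{n\delta^2-2\delta-1}{n}$. Let $B$ be the matrix with columns $d_2^\delta,\dots,d_{n+1}^\delta$ (in this order), and for $i\in\{2,\dots,n+1\}$ let $T$ be the matrix whose columns are the vectors $d_1^\delta,\dots,d_{n+1}^\delta$ with $d_i^\delta$ removed, in increasing index order. For a matrix $S$ write $\mathcal G(S)=S^\top S$. Then: (i) for any choice of $i\in\{2,\dots,n+1\}$, $\mathcal G(T)$ is the $n\times n$ matrix with all diagonal entries $1$, all other entries in the first row and first column equal to $\lambda=\alpha\left(-\frac1n+\delta\right)$, and all remaining off-diagonal entries equal to $\beta$; (ii) $\mathcal G(B)^{-1}=\frac{1}{1-\beta}I-\frac{\beta}{(1-\beta)^2\left(1+\frac{\beta n}{1-\beta}\right)}e^{n\times n}$; (iii) $\mathcal G(T)^{-1}=M^{-1}\mathcal G(B)^{-1}M^{-\top}$, where $$M^{-1}=\begin{bmatrix}-\alpha(1-\delta n) & \mathbf 0^{1\times(n-1)}\\ -e^{(n-1)\times1} & I^{(n-1)\times(n-1)}\end{bmatrix}.$$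
   Context: The canonical uniform simplex is the $n\times(n+1)$ matrix $P^0$ defined as follows, with $a_i=\sqrt{\frac{(n-i+1)(n+1)}{n(n-i+2)}}$ for $i=1,\dots,n$: for $1\le j\le n$, column $j$ has entry $-\frac{a_i}{n-i+1}$ in row $i<j$, entry $a_j$ in row $j$, and $0$ in rows $i>j$; column $n+1$ has entry $-\frac{a_i}{n-i+1}$ in every row $i$. $e_1$ is the first standard basis vector; $e^{m\times k}$ is the $m\times k$ all-ones matrix; $M^{-\top}=(M^{-1})^\top$. *)

theory Defs
  imports "Jordan_Normal_Form.Matrix" "Jordan_Normal_Form.Gauss_Jordan_Elimination"
begin

(* Indices i, j in the paper are 1-based; JNF matrices are 0-based: entry (r,c) <-> (r+1,c+1). *)

definition simplex_a :: "nat \<Rightarrow> nat \<Rightarrow> real" where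
  "simplex_a n i = sqrt ((real (n - i + 1) * real (n + 1)) / (real n * real (n - i + 2)))"

definition canonical_simplex :: "nat \<Rightarrow> real mat" where
  "canonical_simplex n = mat n (n + 1) (\<lambda>(r, c).
     let i = r + 1; j = c + 1 in
     if j \<le> n then
       (if i < j then - simplex_a n i / real (n - i + 1)
        else if i = j then simplex_a n j else 0)
     else - simplex_a n i / real (n - i + 1))"

definition simplex_d :: "nat \<Rightarrow> nat \<Rightarrow> real vec" where
  "simplex_d n j = col (canonical_simplex n) (j - 1)"

definition simplex_alpha :: "nat \<Rightarrow> real \<Rightarrow> real" where
  "simplex_alpha n \<delta> = real n / sqrt (real n ^ 2 * \<delta> ^ 2 - 2 * real n * \<delta> + real n ^ 2)"

definition simplex_beta :: "nat \<Rightarrow> real \<Rightarrow> real" where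
  "simplex_beta n \<delta> = (simplex_alpha n \<delta>) ^ 2 * ((real n * \<delta> ^ 2 - 2 * \<delta> - 1) / real n)"

definition simplex_lambda :: "nat \<Rightarrow> real \<Rightarrow> real" where
  "simplex_lambda n \<delta> = simplex_alpha n \<delta> * (- 1 / real n + \<delta>)"

definition simplex_d_delta :: "nat \<Rightarrow> real \<Rightarrow> nat \<Rightarrow> real vec" where
  "simplex_d_delta n \<delta> j = (if j = 1 then simplex_d n 1
     else simplex_alpha n \<delta> \<cdot>\<^sub>v (simplex_d n j + \<delta> \<cdot>\<^sub>v unit_vec n 0))"

definition simplex_B :: "nat \<Rightarrow> real \<Rightarrow> real mat" where
  "simplex_B n \<delta> = mat_of_cols n (map (simplex_d_delta n \<delta>) [2..<n + 2])"

definition simplex_T :: "nat \<Rightarrow> real \<Rightarrow> nat \<Rightarrow> real mat" where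
  "simplex_T n \<delta> i = mat_of_cols n (map (simplex_d_delta n \<delta>) (filter (\<lambda>j. j \<noteq> i) [1..<n + 2]))"

definition gram :: "real mat \<Rightarrow> real mat" where
  "gram S = transpose_mat S * S"

definition ones_mat :: "nat \<Rightarrow> nat \<Rightarrow> real mat" where
  "ones_mat m k = mat m k (\<lambda>_. 1)"

definition simplex_Minv :: "nat \<Rightarrow> real \<Rightarrow> real mat" where
  "simplex_Minv n \<delta> = mat n n (\<lambda>(r, c).
     if r = 0 then (if c = 0 then - simplex_alpha n \<delta> * (1 - \<delta> * real n) else 0)
     else if c = 0 then -1
     else if r = c then 1 else 0)"

end

theory Submission
  imports Defs "Jordan_Normal_Form.Determinant"
begin


lemma a_sq:
  assumes "n \<ge> 1" "r < n"
  shows "simplex_a n (r+1) ^ 2 = (real n - real r) * (real n+1) / (real n * (real n - real r + 1))"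
proof -
  have e1: "n - (r+1) + 1 = n - r" "n - (r+1) + 2 = n - r + 1" using assms by auto
  show ?thesis unfolding simplex_a_def e1 using assms by (subst real_sqrt_pow2) (auto simp: of_nat_diff add_ac)
qed

lemma a_one: "n \<ge> 1 \<Longrightarrow> simplex_a n 1 = 1"
  unfolding simplex_a_def by (simp add: Suc_diff_le)

lemma tele_alg0:
  fixes N k :: real assumes "k > 0" "N > 0"
  shows "(N+1)/N*(1/(k+1) - 1/(N+1)) + (k*(N+1)/(N*(k+1)))/k^2 = (N+1)/N*(1/k - 1/(N+1))"
proof -
  have nz: "k \<noteq> 0" "k+1 \<noteq> 0" "N \<noteq> 0" using assms by auto
  have 1: "1/k - 1/(k+1) = 1/(k*(k+1))" using nz by (simp add: field_simps)
  have 2: "(k*(N+1)/(N*(k+1)))/k^2 = (N+1)/(N*(k+1)*k)" using nz by (simp add: power2_eq_square)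
  have "(k*(N+1)/(N*(k+1)))/k^2 = (N+1)/N * (1/k - 1/(k+1))" unfolding 1 2 by (simp add: ac_simps)
  then show ?thesis by (simp add: algebra_simps)
qed

lemma tele_alg:
  fixes N m :: real assumes "m \<ge> 0" "N - m > 0" "N > 0"
  shows "(N+1)/N*(1/(N-m+1) - 1/(N+1)) + ((N-m)*(N+1)/(N*(N-m+1)))/(N-m)^2 = (N+1)/N*(1/(N-(m+1)+1) - 1/(N+1))"
  using tele_alg0[of "N-m" N] assms by (simp add: algebra_simps)

lemma tele:
  assumes "n \<ge> 1" "m \<le> n"
  shows "(\<Sum>r<m. (simplex_a n (r+1))^2 / (real n - real r)^2) = (real n + 1) / real n * (1 / (real n - real m + 1) - 1 / (real n + 1))"
  using assms(2)
proof (induction m)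
  case 0
  then show ?case using assms by simp
next
  case (Suc m)
  have m: "m < n" using Suc by auto
  have "(\<Sum>r<Suc m. (simplex_a n (r+1))^2 / (real n - real r)^2) = (real n + 1) / real n * (1 / (real n - real m + 1) - 1 / (real n + 1)) + (simplex_a n (m+1))^2 / (real n - real m)^2"
    using Suc by simp
  also have "... = (real n + 1) / real n * (1 / (real n - real (Suc m) + 1) - 1 / (real n + 1))"
    unfolding a_sq[OF assms(1) m] using tele_alg[of "real m" "real n"] m assms by simp
  finally show ?case .
qed

lemma alg_diag: assumes "(k::real) > 0" "N > 0" shows "(N+1)/N*(1/(k+1) - 1/(N+1)) + k*(N+1)/(N*(k+1)) = 1"
proof -
  have nz: "k \<noteq> 0" "k+1 \<noteq> 0" "N \<noteq> 0" "N+1 \<noteq> 0" using assms by auto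
  have "1/(k+1) - 1/(N+1) = (N-k)/((k+1)*(N+1))" using nz by (simp add: divide_simps)
  then have "(N+1)/N*(1/(k+1) - 1/(N+1)) = (N-k)/(N*(k+1))" using nz by simp
  then show ?thesis using nz by (simp add: divide_simps) (simp add: algebra_simps)
qed
lemma alg_lt: assumes "(k::real) > 0" "N > 0" shows "(N+1)/N*(1/(k+1) - 1/(N+1)) + -(k*(N+1)/(N*(k+1)))/k = -1/N"
proof -
  have nz: "k \<noteq> 0" "k+1 \<noteq> 0" "N \<noteq> 0" "N+1 \<noteq> 0" using assms by auto
  have "1/(k+1) - 1/(N+1) = (N-k)/((k+1)*(N+1))" using nz by (simp add: divide_simps)
  then have "(N+1)/N*(1/(k+1) - 1/(N+1)) = (N-k)/(N*(k+1))" using nz by simp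
  moreover have "-(k*(N+1)/(N*(k+1)))/k = -((N+1)/(N*(k+1)))" using nz by simp
  ultimately show ?thesis using nz by (simp add: divide_simps)
qed
lemma P_entry:
  assumes "r < n" "c \<le> n"
  shows "canonical_simplex n $$ (r,c) = (if c < n \<and> r = c then simplex_a n (r+1)
     else if c < n \<and> c < r then 0 else - simplex_a n (r+1) / (real n - real r))"
proof -
  have "real (n - (r+1) + 1) = real n - real r" using assms by (simp add: of_nat_diff Suc_diff_le)
  then show ?thesis unfolding canonical_simplex_def using assms by (auto simp: Let_def)
qed

lemma sum_split3:
  assumes "c < n"
  shows "(\<Sum>r\<in>{0..<n}. f r) = (\<Sum>r<c. f r) + f c + (\<Sum>r\<in>{Suc c..<n}. f r)"
proof -
  have "(\<Sum>r\<in>{0..<n}. f r) = (\<Sum>r\<in>{0..<c}. f r) + (\<Sum>r\<in>{c..<n}. f r)"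
    using assms by (simp add: sum.atLeastLessThan_concat)
  also have "(\<Sum>r\<in>{c..<n}. f r) = f c + (\<Sum>r\<in>{Suc c..<n}. f r)"
    using assms by (simp add: sum.atLeast_Suc_lessThan)
  finally show ?thesis by (simp add: atLeast0LessThan add.assoc)
qed

lemma col_dot_lt:
  assumes n: "n \<ge> 1" and c: "c1 < c2" "c2 \<le> n"
  shows "(\<Sum>r\<in>{0..<n}. canonical_simplex n $$ (r,c1) * canonical_simplex n $$ (r,c2)) = - 1 / real n"
proof -
  let ?f = "\<lambda>r. canonical_simplex n $$ (r,c1) * canonical_simplex n $$ (r,c2)"
  have c1n: "c1 < n" using c by auto
  have A: "(\<Sum>r<c1. ?f r) = (\<Sum>r<c1. (simplex_a n (r+1))^2 / (real n - real r)^2)"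
    by (rule sum.cong) (use c in \<open>auto simp: P_entry power2_eq_square\<close>)
  have B: "?f c1 = -((simplex_a n (c1+1))^2) / (real n - real c1)"
    using c by (auto simp: P_entry power2_eq_square)
  have C: "(\<Sum>r\<in>{Suc c1..<n}. ?f r) = 0"
    by (rule sum.neutral) (use c in \<open>auto simp: P_entry\<close>)
  have nz: "real n \<noteq> 0" "real n - real c1 \<noteq> 0" "real n - real c1 + 1 \<noteq> 0" "real n + 1 \<noteq> 0"
    using c n by auto
  have k: "real n - real c1 > 0" using c1n by simp
  show ?thesis unfolding sum_split3[OF c1n] A B C tele[OF n less_imp_le[OF c1n]] a_sq[OF n c1n]
    using alg_lt[OF k, of "real n"] n by simp
qed

lemma col_dot_eq:
  assumes n: "n \<ge> 1" and c: "c \<le> n"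
  shows "(\<Sum>r\<in>{0..<n}. canonical_simplex n $$ (r,c) * canonical_simplex n $$ (r,c)) = 1"
proof (cases "c < n")
  case True
  let ?f = "\<lambda>r. canonical_simplex n $$ (r,c) * canonical_simplex n $$ (r,c)"
  have A: "(\<Sum>r<c. ?f r) = (\<Sum>r<c. (simplex_a n (r+1))^2 / (real n - real r)^2)"
    by (rule sum.cong) (use True in \<open>auto simp: P_entry power2_eq_square\<close>)
  have B: "?f c = (simplex_a n (c+1))^2"
    using True by (auto simp: P_entry power2_eq_square)
  have C: "(\<Sum>r\<in>{Suc c..<n}. ?f r) = 0"
    by (rule sum.neutral) (use c in \<open>auto simp: P_entry\<close>)
  have nz: "real n \<noteq> 0" "real n - real c \<noteq> 0" "real n - real c + 1 \<noteq> 0" "real n + 1 \<noteq> 0"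
    using True n by auto
  have k: "real n - real c > 0" using True by simp
  show ?thesis unfolding sum_split3[OF True] A B C tele[OF n less_imp_le[OF True]] a_sq[OF n True]
    using alg_diag[OF k, of "real n"] n by simp
next
  case False
  then have cn: "c = n" using c by auto
  have A: "(\<Sum>r\<in>{0..<n}. canonical_simplex n $$ (r,c) * canonical_simplex n $$ (r,c)) = (\<Sum>r<n. (simplex_a n (r+1))^2 / (real n - real r)^2)"
    unfolding atLeast0LessThan
    by (rule sum.cong) (use cn in \<open>auto simp: P_entry power2_eq_square\<close>)
  have nz: "real n \<noteq> 0" "real n + 1 \<noteq> 0" "real n + real n * real n \<noteq> 0"
  proof -
    have p: "real n > 0" using n by simp
    then have "real n + real n * real n > 0" by (simp add: add_pos_pos)
    then show "real n \<noteq> 0" "real n + 1 \<noteq> 0" "real n + real n * real n \<noteq> 0" using p by auto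
  qed
  show ?thesis unfolding A tele[OF n order.refl] using nz by (simp add: field_simps)
qed




lemma dimP[simp]: "dim_row (canonical_simplex n) = n" "dim_col (canonical_simplex n) = n+1"
  by (simp_all add: canonical_simplex_def)

lemma d_carrier[simp]: "simplex_d n j \<in> carrier_vec n"
  unfolding simplex_d_def using col_dim[of "canonical_simplex n"] by simp

lemma d_dim[simp]: "dim_vec (simplex_d n j) = n"
  unfolding simplex_d_def by simp

lemma d_index: "r < n \<Longrightarrow> j \<in> {1..n+1} \<Longrightarrow> simplex_d n j $ r = canonical_simplex n $$ (r, j - 1)"
  unfolding simplex_d_def by (rule index_col) auto

lemma d_dot:
  assumes n: "n \<ge> 1" and j: "j \<in> {1..n+1}" and k: "k \<in> {1..n+1}"
  shows "simplex_d n j \<bullet> simplex_d n k = (if j = k then 1 else - 1 / real n)"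
proof -
  have e: "simplex_d n j \<bullet> simplex_d n k = (\<Sum>r\<in>{0..<n}. canonical_simplex n $$ (r, j-1) * canonical_simplex n $$ (r, k-1))"
    unfolding scalar_prod_def d_dim by (intro sum.cong refl) (use j k in \<open>simp add: d_index\<close>)
  consider "j = k" | "j < k" | "k < j" by linarith
  then show ?thesis
  proof cases
    case 1 then show ?thesis unfolding e using col_dot_eq[OF n, of "k-1"] k by auto
  next
    case 2 then show ?thesis unfolding e using col_dot_lt[OF n, of "j-1" "k-1"] j k by auto
  next
    case 3 then show ?thesis unfolding e using col_dot_lt[OF n, of "k-1" "j-1"] j k by (auto simp: mult.commute)
  qed
qed

lemma d_0:
  assumes n: "n \<ge> 1" and j: "j \<in> {1..n+1}"
  shows "simplex_d n j $ 0 = (if j = 1 then 1 else - 1 / real n)"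
proof -
  have "simplex_d n j $ 0 = canonical_simplex n $$ (0, j-1)" using n j by (intro d_index) auto
  also have "... = (if j - 1 < n \<and> 0 = j - 1 then simplex_a n (0+1)
     else if j - 1 < n \<and> j - 1 < 0 then 0 else - simplex_a n (0+1) / (real n - real 0))"
    using n j by (intro P_entry) auto
  also have "... = (if j = 1 then 1 else - 1 / real n)" using n j a_one[OF n] by auto
  finally show ?thesis .
qed

lemma dd_carrier[simp]: "simplex_d_delta n \<delta> j \<in> carrier_vec n"
  unfolding simplex_d_delta_def by auto

lemma alpha_sq:
  assumes n: "n \<ge> 2" and d: "0 \<le> \<delta>" "\<delta> < 1 / real n"
  shows "(simplex_alpha n \<delta>)^2 = real n / (real n * \<delta>^2 - 2 * \<delta> + real n)"
    and "real n * \<delta>^2 - 2 * \<delta> + real n > 0"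
proof -
  have np: "real n \<ge> 2" using n by simp
  have "\<delta> * real n < 1" using d np by (simp add: field_simps)
  moreover have "\<delta> * 2 \<le> \<delta> * real n" using d np by (intro mult_left_mono) auto
  ultimately have "2 * \<delta> < real n" using np by linarith
  moreover have "real n * \<delta>^2 \<ge> 0" by simp
  ultimately show D: "real n * \<delta>^2 - 2 * \<delta> + real n > 0" by linarith
  have e: "real n ^ 2 * \<delta> ^ 2 - 2 * real n * \<delta> + real n ^ 2 = real n * (real n * \<delta>^2 - 2 * \<delta> + real n)"
    by (simp add: algebra_simps power2_eq_square)
  have pos: "real n * (real n * \<delta>^2 - 2 * \<delta> + real n) > 0" using D np by simp
  show "(simplex_alpha n \<delta>)^2 = real n / (real n * \<delta>^2 - 2 * \<delta> + real n)"
    unfolding simplex_alpha_def e power_divide using pos np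
    by (simp add: power2_eq_square)
qed

lemma dd_dot:
  assumes n: "n \<ge> 2" and d: "0 \<le> \<delta>" "\<delta> < 1 / real n"
    and j: "j \<in> {1..n+1}" and k: "k \<in> {1..n+1}"
  shows "simplex_d_delta n \<delta> j \<bullet> simplex_d_delta n \<delta> k =
     (if j = k then 1 else if j = 1 \<or> k = 1 then simplex_lambda n \<delta> else simplex_beta n \<delta>)"
proof -
  have n1: "n \<ge> 1" and n0: "0 < n" using n by auto
  let ?a = "simplex_alpha n \<delta>"
  let ?e = "unit_vec n 0 :: real vec"
  have ee: "?e \<bullet> ?e = 1" using n0 by simp
  have de: "\<And>j. j \<in> {1..n+1} \<Longrightarrow> simplex_d n j \<bullet> ?e = simplex_d n j $ 0" using n0 by simp
  have ed: "\<And>j. j \<in> {1..n+1} \<Longrightarrow> ?e \<bullet> simplex_d n j = simplex_d n j $ 0"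
    using n0 by (subst comm_scalar_prod[of _ n]) auto
  have gen: "(simplex_d n j + \<delta> \<cdot>\<^sub>v ?e) \<bullet> (simplex_d n k + \<delta> \<cdot>\<^sub>v ?e) =
      simplex_d n j \<bullet> simplex_d n k + \<delta> * simplex_d n j $ 0 + \<delta> * simplex_d n k $ 0 + \<delta>^2"
    using j k ee de ed
    by (simp add: add_scalar_prod_distrib[of _ n] scalar_prod_add_distrib[of _ n] smult_scalar_prod_distrib[of _ n] scalar_prod_smult_distrib[of _ n] power2_eq_square algebra_simps)
  have gen1: "simplex_d n 1 \<bullet> (simplex_d n k + \<delta> \<cdot>\<^sub>v ?e) = simplex_d n 1 \<bullet> simplex_d n k + \<delta> * simplex_d n 1 $ 0"
    using k de n1 by (simp add: scalar_prod_add_distrib[of _ n])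
  have gen2: "(simplex_d n j + \<delta> \<cdot>\<^sub>v ?e) \<bullet> simplex_d n 1 = simplex_d n j \<bullet> simplex_d n 1 + \<delta> * simplex_d n 1 $ 0"
    using j ed n1 by (simp add: add_scalar_prod_distrib[of _ n])
  have D: "real n * \<delta>^2 - 2 * \<delta> + real n > 0" by (rule alpha_sq(2)[OF n d])
  have np: "real n > 0" using n0 by simp
  show ?thesis
  proof (cases "j = 1")
    case True
    show ?thesis
    proof (cases "k = 1")
      case True
      with \<open>j = 1\<close> show ?thesis unfolding simplex_d_delta_def using d_dot[OF n1] by auto
    next
      case False
      then show ?thesis using \<open>j = 1\<close> unfolding simplex_d_delta_def simplex_lambda_def
        using gen1 d_dot[OF n1 _ k, of 1] d_0[OF n1, of 1] n1 by (simp add: scalar_prod_smult_distrib[of _ n])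
    qed
  next
    case False
    show ?thesis
    proof (cases "k = 1")
      case True
      then show ?thesis using \<open>j \<noteq> 1\<close> unfolding simplex_d_delta_def simplex_lambda_def
        using gen2 d_dot[OF n1 j, of 1] d_0[OF n1, of 1] n1 by (simp add: smult_scalar_prod_distrib[of _ n] mult.commute)
    next
      case False
      have "simplex_d_delta n \<delta> j \<bullet> simplex_d_delta n \<delta> k = ?a * ?a * ((simplex_d n j + \<delta> \<cdot>\<^sub>v ?e) \<bullet> (simplex_d n k + \<delta> \<cdot>\<^sub>v ?e))"
        using \<open>j \<noteq> 1\<close> False unfolding simplex_d_delta_def
        by (simp add: smult_scalar_prod_distrib[of _ n] scalar_prod_smult_distrib[of _ n])
      also have "... = ?a^2 * (simplex_d n j \<bullet> simplex_d n k - 2 * \<delta> / real n + \<delta>^2)"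
        unfolding gen d_0[OF n1 j] d_0[OF n1 k] using \<open>j \<noteq> 1\<close> False np
        by (simp add: field_simps power2_eq_square)
      also have "... = (if j = k then 1 else simplex_beta n \<delta>)"
      proof (cases "j = k")
        case True
        have "1 - 2*\<delta>/real n + \<delta>^2 = (real n*\<delta>^2 - 2*\<delta> + real n)/real n"
          using np by (simp add: field_simps)
        then show ?thesis unfolding d_dot[OF n1 j k] alpha_sq(1)[OF n d] using D np True
          by simp
      next
        case False
        then show ?thesis unfolding d_dot[OF n1 j k] simplex_beta_def using np
          by (simp add: field_simps)
      qed
      finally show ?thesis using \<open>j \<noteq> 1\<close> \<open>k \<noteq> 1\<close> by simp
    qed
  qed
qed




definition smat :: "nat \<Rightarrow> real \<Rightarrow> real \<Rightarrow> real \<Rightarrow> real \<Rightarrow> real \<Rightarrow> real mat" where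
  "smat n a b c d e = mat n n (\<lambda>(r,s). if r = 0 then (if s = 0 then a else b)
      else if s = 0 then c else if r = s then d else e)"

lemma smat_carrier[simp]: "smat n a b c d e \<in> carrier_mat n n"
  unfolding smat_def by simp

lemma smat_dims[simp]: "dim_row (smat n a b c d e) = n" "dim_col (smat n a b c d e) = n"
  unfolding smat_def by simp_all

lemma smat_index: "r < n \<Longrightarrow> s < n \<Longrightarrow> smat n a b c d e $$ (r,s) = (if r = 0 then (if s = 0 then a else b)
      else if s = 0 then c else if r = s then d else e)"
  unfolding smat_def by simp

lemma card_minus1:
  assumes "finite S" "s \<in> S"
  shows "real (card (S - {s})) = real (card S) - 1"
proof -
  have "card S > 0" using assms card_gt_0_iff by auto
  then show ?thesis using assms by (simp add: card_Diff_singleton of_nat_diff)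
qed

lemma sum_if1:
  assumes "finite S" "s \<in> S"
  shows "(\<Sum>k\<in>S. if k = s then x else y) = x + (real (card S) - 1) * (y::real)"
proof -
  have "(\<Sum>k\<in>S. if k = s then x else y) = x + (\<Sum>k\<in>S - {s}. if k = s then x else y)"
    using assms by (simp add: sum.remove)
  also have "(\<Sum>k\<in>S - {s}. if k = s then x else y) = (\<Sum>k\<in>S - {s}. y)" by (rule sum.cong) auto
  also have "... = (real (card S) - 1) * y" using card_minus1[OF assms] by simp
  finally show ?thesis .
qed

lemma sum_if2:
  assumes "finite S" "r \<in> S" "s \<in> S" "r \<noteq> s"
  shows "(\<Sum>k\<in>S. if k = r then x else if k = s then z else y) = x + z + (real (card S) - 2) * (y::real)"
proof -
  have "(\<Sum>k\<in>S. if k = r then x else if k = s then z else y) = x + (\<Sum>k\<in>S - {r}. if k = r then x else if k = s then z else y)"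
    using assms by (simp add: sum.remove)
  also have "(\<Sum>k\<in>S - {r}. if k = r then x else if k = s then z else y) = (\<Sum>k\<in>S - {r}. if k = s then z else y)"
    by (rule sum.cong) auto
  also have "... = z + (real (card (S - {r})) - 1) * y" using assms by (intro sum_if1) auto
  also have "real (card (S - {r})) = real (card S) - 1" by (rule card_minus1[OF assms(1) assms(2)])
  finally show ?thesis by (simp add: algebra_simps)
qed

lemma mat_mult_entry:
  assumes "r < n" "s < n"
  shows "(mat n n f * mat n n g) $$ (r,s) = (\<Sum>k\<in>{0..<n}. f (r,k) * g (k,s))"
  using assms by (simp add: scalar_prod_def)

lemma sum_split0:
  assumes "0 < n"
  shows "(\<Sum>k\<in>{0..<n}. h k) = h 0 + (\<Sum>k\<in>{1..<(n::nat)}. (h k :: real))"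
proof -
  have "{0..<n} = insert 0 {1..<n}" using assms by auto
  then show ?thesis by simp
qed

lemma smat_mult:
  assumes n: "n \<ge> 2"
  shows "smat n a b c d e * smat n a' b' c' d' e' =
    smat n (a*a' + (real n - 1)*b*c') (a*b' + b*d' + (real n - 2)*b*e')
           (c*a' + d*c' + (real n - 2)*e*c') (c*b' + d*d' + (real n - 2)*e*e')
           (c*b' + d*e' + e*d' + (real n - 3)*e*e')"
proof (rule eq_matI)
  fix r s assume r: "r < dim_row (smat n (a*a' + (real n - 1)*b*c') (a*b' + b*d' + (real n - 2)*b*e')
           (c*a' + d*c' + (real n - 2)*e*c') (c*b' + d*d' + (real n - 2)*e*e')
           (c*b' + d*e' + e*d' + (real n - 3)*e*e'))"
   and s: "s < dim_col (smat n (a*a' + (real n - 1)*b*c') (a*b' + b*d' + (real n - 2)*b*e')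
           (c*a' + d*c' + (real n - 2)*e*c') (c*b' + d*d' + (real n - 2)*e*e')
           (c*b' + d*e' + e*d' + (real n - 3)*e*e'))"
  then have r: "r < n" and s: "s < n" by auto
  let ?S = "{1..<n}"
  have cS: "real (card ?S) = real n - 1" using n by (simp add: of_nat_diff)
  have fS: "finite ?S" by simp
  have e: "(smat n a b c d e * smat n a' b' c' d' e') $$ (r,s) =
     (\<Sum>k\<in>{0..<n}. smat n a b c d e $$ (r,k) * smat n a' b' c' d' e' $$ (k,s))"
    using r s by (simp add: scalar_prod_def)
  also have "... = smat n a b c d e $$ (r,0) * smat n a' b' c' d' e' $$ (0,s) +
      (\<Sum>k\<in>?S. smat n a b c d e $$ (r,k) * smat n a' b' c' d' e' $$ (k,s))"
    using n by (intro sum_split0) auto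
  finally have E: "(smat n a b c d e * smat n a' b' c' d' e') $$ (r,s) = smat n a b c d e $$ (r,0) * smat n a' b' c' d' e' $$ (0,s) +
      (\<Sum>k\<in>?S. smat n a b c d e $$ (r,k) * smat n a' b' c' d' e' $$ (k,s))" .
  have n0: "0 < n" using n by auto
  show "(smat n a b c d e * smat n a' b' c' d' e') $$ (r,s) = smat n (a*a' + (real n - 1)*b*c') (a*b' + b*d' + (real n - 2)*b*e')
           (c*a' + d*c' + (real n - 2)*e*c') (c*b' + d*d' + (real n - 2)*e*e')
           (c*b' + d*e' + e*d' + (real n - 3)*e*e') $$ (r,s)"
  proof (cases "r = 0")
    case True
    show ?thesis
    proof (cases "s = 0")
      case True
      have "(\<Sum>k\<in>?S. smat n a b c d e $$ (r,k) * smat n a' b' c' d' e' $$ (k,s)) = (\<Sum>k\<in>?S. b * c')"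
        by (rule sum.cong) (use \<open>r = 0\<close> True in \<open>auto simp: smat_index\<close>)
      then show ?thesis unfolding E using \<open>r = 0\<close> True n0 cS by (simp add: smat_index)
    next
      case False
      have "(\<Sum>k\<in>?S. smat n a b c d e $$ (r,k) * smat n a' b' c' d' e' $$ (k,s)) = (\<Sum>k\<in>?S. if k = s then b * d' else b * e')"
        by (rule sum.cong) (use \<open>r = 0\<close> False s in \<open>auto simp: smat_index\<close>)
      also have "... = b * d' + (real (card ?S) - 1) * (b * e')" using False s by (intro sum_if1) auto
      finally show ?thesis unfolding E using \<open>r = 0\<close> False n0 s cS by (simp add: smat_index algebra_simps)
    qed
  next
    case False
    show ?thesis
    proof (cases "s = 0")
      case True
      have "(\<Sum>k\<in>?S. smat n a b c d e $$ (r,k) * smat n a' b' c' d' e' $$ (k,s)) = (\<Sum>k\<in>?S. if k = r then d * c' else e * c')"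
        by (rule sum.cong) (use \<open>r \<noteq> 0\<close> True r in \<open>auto simp: smat_index\<close>)
      also have "... = d * c' + (real (card ?S) - 1) * (e * c')" using False r by (intro sum_if1) auto
      finally show ?thesis unfolding E using \<open>r \<noteq> 0\<close> True n0 r cS by (simp add: smat_index algebra_simps)
    next
      case False
      show ?thesis
      proof (cases "r = s")
        case True
        have "(\<Sum>k\<in>?S. smat n a b c d e $$ (r,k) * smat n a' b' c' d' e' $$ (k,s)) = (\<Sum>k\<in>?S. if k = r then d * d' else e * e')"
          by (rule sum.cong) (use \<open>r \<noteq> 0\<close> True r in \<open>auto simp: smat_index\<close>)
        also have "... = d * d' + (real (card ?S) - 1) * (e * e')" using \<open>r \<noteq> 0\<close> r by (intro sum_if1) auto
        finally show ?thesis unfolding E using \<open>r \<noteq> 0\<close> \<open>s \<noteq> 0\<close> True n0 r cS by (simp add: smat_index algebra_simps)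
      next
        case rs: False
        have "(\<Sum>k\<in>?S. smat n a b c d e $$ (r,k) * smat n a' b' c' d' e' $$ (k,s)) = (\<Sum>k\<in>?S. if k = r then d * e' else if k = s then e * d' else e * e')"
          by (rule sum.cong) (use \<open>r \<noteq> 0\<close> \<open>s \<noteq> 0\<close> rs r s in \<open>auto simp: smat_index\<close>)
        also have "... = d * e' + e * d' + (real (card ?S) - 2) * (e * e')" using \<open>r \<noteq> 0\<close> \<open>s \<noteq> 0\<close> rs r s by (intro sum_if2) auto
        finally show ?thesis unfolding E using \<open>r \<noteq> 0\<close> \<open>s \<noteq> 0\<close> rs n0 r s cS by (simp add: smat_index algebra_simps)
      qed
    qed
  qed
qed auto

lemma smat_transpose: "transpose_mat (smat n a b c d e) = smat n a c b d e"
  by (rule eq_matI) (auto simp: smat_index)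

lemma smat_one: "1\<^sub>m n = smat n 1 0 0 1 0"
  by (rule eq_matI) (auto simp: smat_index)

lemma smat_ones: "ones_mat n n = smat n 1 1 1 1 1"
  unfolding ones_mat_def by (rule eq_matI) (auto simp: smat_index)

lemma smat_smult: "x \<cdot>\<^sub>m smat n a b c d e = smat n (x*a) (x*b) (x*c) (x*d) (x*e)"
  by (rule eq_matI) (auto simp: smat_index)

lemma smat_minus: "smat n a b c d e - smat n a' b' c' d' e' = smat n (a-a') (b-b') (c-c') (d-d') (e-e')"
  by (rule eq_matI) (auto simp: smat_index)

lemma mat_inverse_eqI:
  assumes A: "A \<in> carrier_mat n n" and X: "X \<in> carrier_mat n n" and AX: "A * X = 1\<^sub>m n"
  shows "mat_inverse A = Some (X :: real mat)"
proof -
  let ?R = "ring_mat TYPE(real) n (undefined :: unit)"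
  have XA: "X * A = 1\<^sub>m n" by (rule mat_mult_left_right_inverse[OF A X AX])
  have c1: "A \<in> carrier ?R" using A by (simp add: ring_mat_simps)
  have c2: "X \<in> carrier ?R" using X by (simp add: ring_mat_simps)
  have m1: "X \<otimes>\<^bsub>?R\<^esub> A = \<one>\<^bsub>?R\<^esub>" using XA by (simp add: ring_mat_simps)
  have m2: "A \<otimes>\<^bsub>?R\<^esub> X = \<one>\<^bsub>?R\<^esub>" using AX by (simp add: ring_mat_simps)
  have U: "A \<in> Units ?R" unfolding Units_def using c1 c2 m1 m2 by blast
  have "mat_inverse A \<noteq> None"
  proof
    assume "mat_inverse A = None"
    then have "A \<notin> Units ?R" by (rule mat_inverse(1)[OF A])
    with U show False by simp
  qed
  then obtain B where B: "mat_inverse A = Some B" by blast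
  from mat_inverse(2)[OF A B] have BA: "B * A = 1\<^sub>m n" and Bc: "B \<in> carrier_mat n n" by auto
  have "B = B * (A * X)" using Bc AX by simp
  also have "... = (B * A) * X" using Bc A X by (simp add: assoc_mult_mat)
  also have "... = X" using BA X by simp
  finally show ?thesis using B by simp
qed




lemma gram_cols:
  assumes "\<And>j. j \<in> set L \<Longrightarrow> v j \<in> carrier_vec n"
  shows "gram (mat_of_cols n (map v L)) = mat (length L) (length L) (\<lambda>(r,c). v (L!r) \<bullet> v (L!c))"
proof (rule eq_matI)
  fix r c assume "r < dim_row (mat (length L) (length L) (\<lambda>(r,c). v (L!r) \<bullet> v (L!c)))"
    "c < dim_col (mat (length L) (length L) (\<lambda>(r,c). v (L!r) \<bullet> v (L!c)))"
  then have r: "r < length L" and c: "c < length L" by auto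
  have cr: "col (mat_of_cols n (map v L)) r = v (L!r)" using r assms by (subst col_mat_of_cols) auto
  have cc: "col (mat_of_cols n (map v L)) c = v (L!c)" using c assms by (subst col_mat_of_cols) auto
  have "gram (mat_of_cols n (map v L)) $$ (r,c) = row (transpose_mat (mat_of_cols n (map v L))) r \<bullet> col (mat_of_cols n (map v L)) c"
    unfolding gram_def using r c by (subst index_mult_mat) auto
  also have "... = v (L!r) \<bullet> v (L!c)" using r by (subst row_transpose) (auto simp: cr cc)
  finally show "gram (mat_of_cols n (map v L)) $$ (r,c) = mat (length L) (length L) (\<lambda>(r,c). v (L!r) \<bullet> v (L!c)) $$ (r,c)"
    using r c by simp
qed (auto simp: gram_def)

lemma dd_gram:
  assumes n: "n \<ge> 2" and d: "0 \<le> \<delta>" "\<delta> < 1 / real n"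
    and L: "distinct L" "set L \<subseteq> {1..n+1}" "length L = n"
  shows "gram (mat_of_cols n (map (simplex_d_delta n \<delta>) L)) = mat n n (\<lambda>(r,c). if r = c then 1
      else if L!r = 1 \<or> L!c = 1 then simplex_lambda n \<delta> else simplex_beta n \<delta>)"
  unfolding gram_cols[of L "simplex_d_delta n \<delta>" n, OF dd_carrier] L(3)
proof (rule eq_matI)
  fix r c assume "r < dim_row (mat n n (\<lambda>(r,c). if r = c then 1
      else if L!r = 1 \<or> L!c = 1 then simplex_lambda n \<delta> else simplex_beta n \<delta>))"
    "c < dim_col (mat n n (\<lambda>(r,c). if r = c then 1
      else if L!r = 1 \<or> L!c = 1 then simplex_lambda n \<delta> else simplex_beta n \<delta>))"
  then have r: "r < n" and c: "c < n" by auto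
  have Lr: "L!r \<in> {1..n+1}" "L!c \<in> {1..n+1}" using L r c nth_mem by (metis subsetD)+
  have eq: "(L!r = L!c) = (r = c)" using L r c by (simp add: nth_eq_iff_index_eq)
  show "mat n n (\<lambda>(r,c). simplex_d_delta n \<delta> (L!r) \<bullet> simplex_d_delta n \<delta> (L!c)) $$ (r,c) = mat n n (\<lambda>(r,c). if r = c then 1
      else if L!r = 1 \<or> L!c = 1 then simplex_lambda n \<delta> else simplex_beta n \<delta>) $$ (r,c)"
    using r c dd_dot[OF n d Lr] eq by simp
qed auto

lemma T_list:
  assumes "i \<in> {2..n+1}"
  defines "L \<equiv> filter (\<lambda>j. j \<noteq> i) [1..<n + 2]"
  shows "distinct L" "set L \<subseteq> {1..n+1}" "length L = n" "L!0 = 1" "\<And>r. r < n \<Longrightarrow> (L!r = 1) = (r = 0)"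
proof -
  show D: "distinct L" unfolding L_def by simp
  have S: "set L = {1..<n+2} - {i}" unfolding L_def by auto
  show "set L \<subseteq> {1..n+1}" unfolding S by auto
  have "length L = card (set L)" using distinct_card[OF D] by simp
  also have "... = n" unfolding S using assms(1) by (simp add: card_Diff_singleton)
  finally show len: "length L = n" .
  have "[1..<n+2] = 1 # [2..<n+2]" by (subst upt_conv_Cons) (auto simp: numeral_2_eq_2)
  then have "L = 1 # filter (\<lambda>j. j \<noteq> i) [2..<n + 2]" unfolding L_def using assms(1) by simp
  then show L0: "L!0 = 1" by simp
  fix r assume r: "r < n"
  show "(L!r = 1) = (r = 0)"
  proof
    assume "L!r = 1"
    then have "L!r = L!0" using L0 by simp
    then show "r = 0" using D r len assms(1) by (simp add: nth_eq_iff_index_eq)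
  qed (use L0 in simp)
qed

lemma gram_T:
  assumes n: "n \<ge> 2" and d: "0 \<le> \<delta>" "\<delta> < 1 / real n" and i: "i \<in> {2..n+1}"
  shows "gram (simplex_T n \<delta> i) = smat n 1 (simplex_lambda n \<delta>) (simplex_lambda n \<delta>) 1 (simplex_beta n \<delta>)"
proof -
  note TL = T_list[OF i]
  have "gram (simplex_T n \<delta> i) = mat n n (\<lambda>(r,c). if r = c then 1
      else if filter (\<lambda>j. j \<noteq> i) [1..<n + 2]!r = 1 \<or> filter (\<lambda>j. j \<noteq> i) [1..<n + 2]!c = 1 then simplex_lambda n \<delta> else simplex_beta n \<delta>)"
    unfolding simplex_T_def by (rule dd_gram[OF n d TL(1-3)])
  also have "... = smat n 1 (simplex_lambda n \<delta>) (simplex_lambda n \<delta>) 1 (simplex_beta n \<delta>)"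
  proof (rule eq_matI)
    fix r c assume "r < dim_row (smat n 1 (simplex_lambda n \<delta>) (simplex_lambda n \<delta>) 1 (simplex_beta n \<delta>))"
      "c < dim_col (smat n 1 (simplex_lambda n \<delta>) (simplex_lambda n \<delta>) 1 (simplex_beta n \<delta>))"
    then have r: "r < n" and c: "c < n" by auto
    show "mat n n (\<lambda>(r,c). if r = c then 1
      else if filter (\<lambda>j. j \<noteq> i) [1..<n + 2]!r = 1 \<or> filter (\<lambda>j. j \<noteq> i) [1..<n + 2]!c = 1 then simplex_lambda n \<delta> else simplex_beta n \<delta>) $$ (r,c) =
      smat n 1 (simplex_lambda n \<delta>) (simplex_lambda n \<delta>) 1 (simplex_beta n \<delta>) $$ (r,c)"
      apply (simp only: index_mat(1)[OF r c] smat_index[OF r c] prod.case TL(5)[OF r] TL(5)[OF c])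
      by auto
  qed simp_all
  finally show ?thesis .
qed

lemma gram_B:
  assumes n: "n \<ge> 2" and d: "0 \<le> \<delta>" "\<delta> < 1 / real n"
  shows "gram (simplex_B n \<delta>) = smat n 1 (simplex_beta n \<delta>) (simplex_beta n \<delta>) 1 (simplex_beta n \<delta>)"
proof -
  have L: "distinct [2..<n+2]" "set [2..<n+2] \<subseteq> {1..n+1}" "length [2..<n+2] = n" by auto
  have "gram (simplex_B n \<delta>) = mat n n (\<lambda>(r,c). if r = c then 1
      else if [2..<n+2]!r = 1 \<or> [2..<n+2]!c = 1 then simplex_lambda n \<delta> else simplex_beta n \<delta>)"
    unfolding simplex_B_def by (rule dd_gram[OF n d L])
  also have "... = smat n 1 (simplex_beta n \<delta>) (simplex_beta n \<delta>) 1 (simplex_beta n \<delta>)"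
  proof (rule eq_matI)
    fix r c assume "r < dim_row (smat n 1 (simplex_beta n \<delta>) (simplex_beta n \<delta>) 1 (simplex_beta n \<delta>))"
      "c < dim_col (smat n 1 (simplex_beta n \<delta>) (simplex_beta n \<delta>) 1 (simplex_beta n \<delta>))"
    then have r: "r < n" and c: "c < n" by auto
    have u: "[2..<n+2]!r = 2 + r" "[2..<n+2]!c = 2 + c" using r c by (intro nth_upt; simp)+
    show "mat n n (\<lambda>(r,c). if r = c then 1
      else if [2..<n+2]!r = 1 \<or> [2..<n+2]!c = 1 then simplex_lambda n \<delta> else simplex_beta n \<delta>) $$ (r,c) =
      smat n 1 (simplex_beta n \<delta>) (simplex_beta n \<delta>) 1 (simplex_beta n \<delta>) $$ (r,c)"
      apply (simp only: index_mat(1)[OF r c] smat_index[OF r c] prod.case u)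
      by auto
  qed simp_all
  finally show ?thesis .
qed

lemma smat_cong: "a = a' \<Longrightarrow> b = b' \<Longrightarrow> c = c' \<Longrightarrow> d = d' \<Longrightarrow> e = e' \<Longrightarrow> smat n a b c d e = smat n a' b' c' d' e'"
  by simp

lemma Minv_smat: "simplex_Minv n \<delta> = smat n (- simplex_alpha n \<delta> * (1 - \<delta> * real n)) 0 (-1) 1 0"
  unfolding simplex_Minv_def smat_def by (rule eq_matI) simp_all




lemma alg_facts:
  assumes n: "n \<ge> 2" and d: "0 \<le> \<delta>" "\<delta> < 1 / real n"
  defines "a \<equiv> simplex_alpha n \<delta>" and "b \<equiv> simplex_beta n \<delta>" and "l \<equiv> simplex_lambda n \<delta>"
    and "m \<equiv> simplex_alpha n \<delta> * (1 - \<delta> * real n)" and "G \<equiv> 1 + (real n - 1) * simplex_beta n \<delta>"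
  shows "1 - b \<noteq> 0" "G \<noteq> 0" "l * m = - G" "m^2 = real n * G" "m + real n * l = 0"
proof -
  define N where "N = real n"
  define D where "D = N * \<delta>^2 - 2 * \<delta> + N"
  have N0: "N \<noteq> 0" "N > 0" using n by (auto simp: N_def)
  have Dp: "D > 0" using alpha_sq(2)[OF n d] by (simp add: D_def N_def)
  have a2: "a^2 = N / D" using alpha_sq(1)[OF n d] by (simp add: a_def D_def N_def)
  have a2D: "a^2 * D = N" using a2 Dp by simp
  have Nd: "N * \<delta> < 1" using d N0 by (simp add: N_def field_simps)
  have bD: "b * D = N * \<delta>^2 - 2 * \<delta> - 1"
  proof -
    have "b * D = (a^2 * D) * ((N * \<delta>^2 - 2 * \<delta> - 1) / N)"
      by (simp add: b_def a_def simplex_beta_def N_def)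
    then show ?thesis using a2D N0 by simp
  qed
  have lmD: "l * m * D = -((1 - \<delta> * N)^2)"
  proof -
    have "l * m * D = (a^2 * D) * ((- 1 / N + \<delta>) * (1 - \<delta> * N))"
      by (simp add: l_def m_def a_def simplex_lambda_def N_def power2_eq_square algebra_simps)
    also have "... = N * ((- 1 / N + \<delta>) * (1 - \<delta> * N))" using a2D by simp
    also have "... = -((1 - \<delta> * N)^2)" using N0 by (simp add: field_simps power2_eq_square)
    finally show ?thesis .
  qed
  have m2D: "m^2 * D = N * (1 - \<delta> * N)^2"
  proof -
    have "m^2 * D = (a^2 * D) * (1 - \<delta> * N)^2"
      by (simp add: m_def a_def N_def power2_eq_square algebra_simps)
    then show ?thesis using a2D by simp
  qed
  have GD: "G * D = (1 - \<delta> * N)^2"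
  proof -
    have "G * D = D + (N - 1) * (b * D)" unfolding G_def b_def[symmetric] N_def[symmetric]
      by (simp add: algebra_simps)
    also have "... = D + (N - 1) * (N * \<delta>^2 - 2 * \<delta> - 1)" using bD by simp
    also have "... = (1 - \<delta> * N)^2" unfolding D_def by (simp add: algebra_simps power2_eq_square)
    finally show ?thesis .
  qed
  have Gp: "G > 0"
  proof -
    have "(1 - \<delta> * N)^2 > 0" using Nd by (simp add: mult.commute)
    then have "G * D > 0" using GD by simp
    then show ?thesis using Dp by (simp add: zero_less_mult_iff)
  qed
  then show "G \<noteq> 0" by simp
  have "(1 - b) * D = D - b * D" by (simp add: algebra_simps)
  also have "... = D - (N * \<delta>^2 - 2 * \<delta> - 1)" using bD by simp
  also have "... = N + 1" unfolding D_def by simp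
  finally have "(1 - b) * D = N + 1" .
  then have "(1 - b) * D > 0" using N0 by simp
  then show "1 - b \<noteq> 0" by auto
  have "(l * m + G) * D = l * m * D + G * D" by (simp add: algebra_simps)
  then have "(l * m + G) * D = 0" using lmD GD by simp
  then show "l * m = - G" using Dp by simp
  have "(m^2 - N * G) * D = m^2 * D - N * (G * D)" by (simp add: algebra_simps)
  then have "(m^2 - N * G) * D = 0" using m2D GD by simp
  then show "m^2 = real n * G" using Dp by (simp add: N_def)
  show "m + real n * l = 0"
    unfolding m_def l_def simplex_lambda_def using N0 by (simp add: N_def field_simps)
qed

lemma KY_alg:
  fixes p q b G l m N :: real
  assumes pb: "p*(1-b) = 1" and qG: "q*G = b*p" and Geq: "G = 1 + (N-1)*b" and lm: "l*m = -G"
    and m2: "m^2 = N*G" and mNl: "m + N*l = 0"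
  shows "1*(m^2*(p-q)) + (N-1)*l*(m*p) = 1" "1*(m*p) + l*(2*p) + (N-2)*l*p = 0"
    "l*(m^2*(p-q)) + 1*(m*p) + (N-2)*b*(m*p) = 0" "l*(m*p) + 1*(2*p) + (N-2)*b*p = 1"
    "l*(m*p) + 1*p + b*(2*p) + (N-3)*b*p = 0"
proof -
  have a: "1*(m^2*(p-q)) + (N-1)*l*(m*p) = m^2*(p-q) + (N-1)*(l*m)*p" by (simp add: algebra_simps)
  also have "... = G*p - N*(q*G)" unfolding m2 lm by (simp add: algebra_simps)
  also have "... = G*p - N*(b*p)" unfolding qG ..
  also have "... = p*(1-b)" unfolding Geq by (simp add: algebra_simps)
  finally show "1*(m^2*(p-q)) + (N-1)*l*(m*p) = 1" using pb by simp
  have "1*(m*p) + l*(2*p) + (N-2)*l*p = p*(m + N*l)" by (simp add: algebra_simps)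
  then show "1*(m*p) + l*(2*p) + (N-2)*l*p = 0" using mNl by simp
  have "l*(m^2*(p-q)) + 1*(m*p) + (N-2)*b*(m*p) = m*((l*m)*(p-q) + p + (N-2)*b*p)"
    by (simp add: algebra_simps power2_eq_square)
  also have "... = m*(-(G*p) + (q*G) + p + (N-2)*b*p)" unfolding lm by (simp add: algebra_simps)
  also have "... = m*(p*(-G + 1 + (N-1)*b))" unfolding qG by (simp add: algebra_simps)
  also have "... = 0" unfolding Geq by simp
  finally show "l*(m^2*(p-q)) + 1*(m*p) + (N-2)*b*(m*p) = 0" .
  have "l*(m*p) + 1*(2*p) + (N-2)*b*p = (l*m)*p + 2*p + (N-2)*b*p" by (simp add: algebra_simps)
  also have "... = p*(1-b)" unfolding lm Geq by (simp add: algebra_simps)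
  finally show "l*(m*p) + 1*(2*p) + (N-2)*b*p = 1" using pb by simp
  have "l*(m*p) + 1*p + b*(2*p) + (N-3)*b*p = (l*m)*p + p + 2*b*p + (N-3)*b*p" by (simp add: algebra_simps)
  also have "... = 0" unfolding lm Geq by (simp add: algebra_simps)
  finally show "l*(m*p) + 1*p + b*(2*p) + (N-3)*b*p = 0" .
qed

lemma GBX_alg:
  fixes p q b G N :: real
  assumes pb: "p*(1-b) = 1" and qG: "q*G = b*p" and Geq: "G = 1 + (N - 1) * b"
  shows "1 * (p - q) + (N - 1) * b * - q = 1" "1 * - q + b * (p - q) + (N - 2) * b * - q = 0"
   "b * (p - q) + 1 * - q + (N - 2) * b * - q = 0" "b * - q + 1 * (p - q) + (N - 2) * b * - q = 1"
   "b * - q + 1 * - q + b * (p - q) + (N - 3) * b * - q = 0"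
proof -
  have r1: "p - q*G = 1" using pb qG by (simp add: algebra_simps)
  have r2: "b*p - q*G = 0" using qG by simp
  show "1 * (p - q) + (N - 1) * b * - q = 1" "1 * - q + b * (p - q) + (N - 2) * b * - q = 0"
   "b * (p - q) + 1 * - q + (N - 2) * b * - q = 0" "b * - q + 1 * (p - q) + (N - 2) * b * - q = 1"
   "b * - q + 1 * - q + b * (p - q) + (N - 3) * b * - q = 0"
    using r1 r2 unfolding Geq by (simp_all add: algebra_simps)
qed

theorem lemma10:
  fixes n :: nat and \<delta> :: real
  assumes "n \<ge> 2" and "0 \<le> \<delta>" and "\<delta> < 1 / real n"
  shows "(\<forall>i\<in>{2..n+1}. gram (simplex_T n \<delta> i) =
            mat n n (\<lambda>(r, c). if r = c then 1
                              else if r = 0 \<or> c = 0 then simplex_lambda n \<delta>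
                              else simplex_beta n \<delta>))
       \<and> mat_inverse (gram (simplex_B n \<delta>)) =
            Some ((1 / (1 - simplex_beta n \<delta>)) \<cdot>\<^sub>m 1\<^sub>m n
              - (simplex_beta n \<delta> / ((1 - simplex_beta n \<delta>) ^ 2
                   * (1 + simplex_beta n \<delta> * real n / (1 - simplex_beta n \<delta>)))) \<cdot>\<^sub>m ones_mat n n)
       \<and> (\<forall>i\<in>{2..n+1}. mat_inverse (gram (simplex_T n \<delta> i)) =
            Some (simplex_Minv n \<delta> * the (mat_inverse (gram (simplex_B n \<delta>)))
                  * transpose_mat (simplex_Minv n \<delta>)))"
proof -
  have n: "n \<ge> 2" and d: "0 \<le> \<delta>" "\<delta> < 1 / real n" using assms by auto
  define a where "a = simplex_alpha n \<delta>"
  define b where "b = simplex_beta n \<delta>"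
  define l where "l = simplex_lambda n \<delta>"
  define m where "m = simplex_alpha n \<delta> * (1 - \<delta> * real n)"
  define G where "G = 1 + (real n - 1) * simplex_beta n \<delta>"
  define p where "p = 1 / (1 - b)"
  define q where "q = b / ((1 - b) ^ 2 * (1 + b * real n / (1 - b)))"
  note AF = alg_facts[OF n d, folded b_def l_def m_def G_def]
  have Geq: "G = 1 + (real n - 1) * b" by (simp add: G_def b_def)
  have pb: "p * (1 - b) = 1" using AF(1) by (simp add: p_def)
  have qG: "q * G = b * p"
  proof -
    have e: "(1 - b) ^ 2 * (1 + b * real n / (1 - b)) = (1 - b) * G"
      using AF(1) unfolding Geq by (simp add: field_simps power2_eq_square)
    show ?thesis unfolding q_def e p_def using AF(1,2) by simp
  qed
  have lm: "l * m = - G" by (rule AF(3))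
  have m2: "m^2 = real n * G" by (rule AF(4))
  have mNl: "m + real n * l = 0" by (rule AF(5))
  have X: "(1 / (1 - simplex_beta n \<delta>)) \<cdot>\<^sub>m 1\<^sub>m n
              - (simplex_beta n \<delta> / ((1 - simplex_beta n \<delta>) ^ 2
                   * (1 + simplex_beta n \<delta> * real n / (1 - simplex_beta n \<delta>)))) \<cdot>\<^sub>m ones_mat n n
          = smat n (p - q) (- q) (- q) (p - q) (- q)"
    unfolding b_def[symmetric] p_def[symmetric] q_def[symmetric] smat_one smat_ones smat_smult smat_minus
    by (rule smat_cong) simp_all
  have GB: "gram (simplex_B n \<delta>) = smat n 1 b b 1 b" unfolding b_def by (rule gram_B[OF n d])
  have GBX: "gram (simplex_B n \<delta>) * smat n (p - q) (- q) (- q) (p - q) (- q) = 1\<^sub>m n"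
    unfolding GB smat_mult[OF n] smat_one
    by (rule smat_cong) (rule GBX_alg[OF pb qG Geq])+
  have ii: "mat_inverse (gram (simplex_B n \<delta>)) = Some (smat n (p - q) (- q) (- q) (p - q) (- q))"
    by (rule mat_inverse_eqI[OF _ _ GBX]) (simp_all add: GB)
  have Minv: "simplex_Minv n \<delta> = smat n (- m) 0 (-1) 1 0"
    unfolding Minv_smat m_def by (rule smat_cong) simp_all
  have iii: "mat_inverse (gram (simplex_T n \<delta> i)) =
            Some (simplex_Minv n \<delta> * the (mat_inverse (gram (simplex_B n \<delta>)))
                  * transpose_mat (simplex_Minv n \<delta>))" if i: "i \<in> {2..n+1}" for i
  proof -
    have K: "gram (simplex_T n \<delta> i) = smat n 1 l l 1 b"
      unfolding l_def b_def by (rule gram_T[OF n d i])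
    have Y: "simplex_Minv n \<delta> * the (mat_inverse (gram (simplex_B n \<delta>))) * transpose_mat (simplex_Minv n \<delta>)
       = smat n (m^2*(p-q)) (m*p) (m*p) (2*p) p"
      unfolding ii Minv option.sel smat_transpose smat_mult[OF n]
      by (rule smat_cong) (simp_all add: algebra_simps power2_eq_square)
    have KY: "gram (simplex_T n \<delta> i) * (simplex_Minv n \<delta> * the (mat_inverse (gram (simplex_B n \<delta>)))
                  * transpose_mat (simplex_Minv n \<delta>)) = 1\<^sub>m n"
      unfolding K Y smat_mult[OF n] smat_one
      by (rule smat_cong) (rule KY_alg[OF pb qG Geq lm m2 mNl])+
    show ?thesis
      by (rule mat_inverse_eqI[OF _ _ KY]) (simp_all add: K Y)
  qed
  have i: "gram (simplex_T n \<delta> i) =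
            mat n n (\<lambda>(r, c). if r = c then 1
                              else if r = 0 \<or> c = 0 then simplex_lambda n \<delta>
                              else simplex_beta n \<delta>)" if i: "i \<in> {2..n+1}" for i
    unfolding gram_T[OF n d i] smat_def by (rule eq_matI) auto
  show ?thesis using i ii iii X by simp
qed


end
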